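(* Fix $T\ge1$, $M>0$, $c>0$ and $\alpha$ with $\zeta(\alpha)\le 2$ ($\alpha\ge\zeta^{-1}(2)\approx1.7286$, $\zeta$ the Riemann zeta function). Let $E=\{0,1,\dots,\lfloor\log_2\sqrt{2T-1}\rfloor\}$. For each $i\in E$, expert $e_i$ runs OGP on $C$ with step $\eta_i=\frac{\rho}{\varrho\sqrt M}2^i$, subgradients $x_t^*(i)\in\partial\varphi_t(x_t(i))$ and arbitrary predictions $\widehat x_t^*(i)\in H$ with $\|\widehat x_t^*(i)\|\le\varrho$, producing $x_t(i)\in C$. A meta-learner runs ONES over $E$ with $\theta=c/\sqrt M$ and $\widetilde w_1(i)=\beta(i+2)^{-\alpha}$, $\beta^{-1}=\sum_{i\in E}(i+2)^{-\alpha}$, loss vectors $\ell_t(i)=\langle g_t,x_t(i)\rangle$ with $g_t\in\partial\varphi_t(\overline x_t)$, $\overline x_t=\sum_{i\in E}w_t(i)x_t(i)$, and arbitrary prediction vectors $\widehat\ell_t$; assume $\|\ell_t\|_\infty\le\rho\varrho$ and $\|\widehat\ell_t\|_\infty\le\rho\varrho$ for all $t$. Define $$Q_T(j)=4+\varrho^{-2}\sum_{t=1}^{T-1}\|x_t^*(j)-\widehat x_t^*(j)\|^2,\quad L_T=4+\rho^{-2}\varrho^{-2}\sum_{t=1}^{T-1}\|\ell_t-\widehat\ell_t\|_\infty^2,\quad M_T=\max\{L_T,\max_{j\in E}Q_T(j)\},$$ and suppose $M_T\le M$. Then there is a constant $K$ depending only on $\rho,\varrho,\alpha,c$ such that for every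 $z_1,\dots,z_T\in C$, with $P_T=\sum_{t=2}^T\|z_t-z_{t-1}\|$, $$\sum_{t=1}^T\varphi_t(\overline x_t)-\varphi_t(z_t)\le K\sqrt{(1+P_T)M}.$$
   Context: $H$ real Hilbert space; $C\subset H$ nonempty closed convex with diameter $\rho=\sup_{x,y\in C}\|x-y\|\in(0,\infty)$; losses $\varphi_t$ convex with $C\subset\operatorname{dom}\partial\varphi_t$ and $\|g\|\le\varrho<\infty$ for all $g\in\partial\varphi_t(x)$, $x\in C$. OGP with step $\eta$: $\widetilde{x}_{t+1}=P_C(\widetilde{x}_t-\eta x_t^* )$, $x_{t+1}=P_C(\widetilde{x}_{t+1}-\eta\widehat{x}_{t+1}^* )$, $\widetilde x_1\in C$, $P_C$ the metric projection. ONES with step $\theta$: $\widetilde w_{t+1}=\mathscr N(\widetilde w_t\circ e^{-\theta\ell_t})$, $w_{t}=\mathscr N(\widetilde w_{t}\circ e^{-\theta\widehat\ell_{t}})$, $\mathscr N(u)=u/\|u\|_1$, $\circ$ the Hadamard product. *)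

theory Defs
  imports "HOL-Analysis.Analysis"
begin

definition zeta_real :: "real \<Rightarrow> real" where
  "zeta_real s = (\<Sum>n. 1 / (real (Suc n)) powr s)"

definition convex_ereal :: "('a::real_vector \<Rightarrow> ereal) \<Rightarrow> bool" where
  "convex_ereal f \<longleftrightarrow> (\<forall>x. f x \<noteq> -\<infinity>) \<and>
     (\<forall>x y u. 0 \<le> u \<and> u \<le> 1 \<longrightarrow>
        f ((1 - u) *\<^sub>R x + u *\<^sub>R y) \<le> ereal (1 - u) * f x + ereal u * f y)"

definition subdiff :: "('a::real_inner \<Rightarrow> ereal) \<Rightarrow> 'a \<Rightarrow> 'a set" where
  "subdiff f x = {g. \<bar>f x\<bar> \<noteq> \<infinity> \<and> (\<forall>y. f x + ereal (inner g (y - x)) \<le> f y)}"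

definition metric_proj :: "'a::real_inner set \<Rightarrow> 'a \<Rightarrow> 'a" where
  "metric_proj C v = (THE p. p \<in> C \<and> (\<forall>y\<in>C. norm (v - p) \<le> norm (v - y)))"

definition experts :: "nat \<Rightarrow> nat set" where
  "experts T = {0 .. nat \<lfloor>log 2 (sqrt (2 * real T - 1))\<rfloor>}"

text \<open>Optimistic gradient projection (OGP) run of one expert with step eta:
  xs t = subgradients x_t^*, xh t = predictions, xt t = tilde x_t, x t = x_t.\<close>
definition ogp_run :: "'a::real_inner set \<Rightarrow> real \<Rightarrow> (nat \<Rightarrow> 'a) \<Rightarrow> (nat \<Rightarrow> 'a)
    \<Rightarrow> (nat \<Rightarrow> 'a) \<Rightarrow> (nat \<Rightarrow> 'a) \<Rightarrow> bool" where
  "ogp_run C \<eta> xs xh xt x \<longleftrightarrow> xt 1 \<in> C \<and>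
     (\<forall>t\<ge>1. xt (Suc t) = metric_proj C (xt t - \<eta> *\<^sub>R xs t)) \<and>
     (\<forall>t\<ge>1. x t = metric_proj C (xt t - \<eta> *\<^sub>R xh t))"

definition ones_run :: "nat set \<Rightarrow> real \<Rightarrow> (nat \<Rightarrow> real) \<Rightarrow> (nat \<Rightarrow> nat \<Rightarrow> real)
    \<Rightarrow> (nat \<Rightarrow> nat \<Rightarrow> real) \<Rightarrow> (nat \<Rightarrow> nat \<Rightarrow> real) \<Rightarrow> (nat \<Rightarrow> nat \<Rightarrow> real) \<Rightarrow> bool" where
  "ones_run E \<theta> w1 l lh wt w \<longleftrightarrow>
     (\<forall>i\<in>E. wt 1 i = w1 i) \<and>
     (\<forall>t\<ge>1. \<forall>i\<in>E. wt (Suc t) i =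
        wt t i * exp (- \<theta> * l t i) / (\<Sum>j\<in>E. wt t j * exp (- \<theta> * l t j))) \<and>
     (\<forall>t\<ge>1. \<forall>i\<in>E. w t i =
        wt t i * exp (- \<theta> * lh t i) / (\<Sum>j\<in>E. wt t j * exp (- \<theta> * lh t j)))"

definition supnorm :: "nat set \<Rightarrow> (nat \<Rightarrow> real) \<Rightarrow> real" where
  "supnorm E v = Max ((\<lambda>i. \<bar>v i\<bar>) ` E)"

end

theory Submission
  imports Defs
begin


lemma parallelogram:
  fixes a b :: "'a::real_inner"
  shows "(norm (a - b))\<^sup>2 + (norm (a + b))\<^sup>2 = 2 * (norm a)\<^sup>2 + 2 * (norm b)\<^sup>2"
  by (simp add: power2_norm_eq_inner inner_simps inner_commute)

lemma near_point:
  fixes C :: "'a::real_inner set"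
  assumes "C \<noteq> {}" "e > 0"
  shows "\<exists>y\<in>C. norm (v - y) < infdist v C + e"
proof -
  have bdd: "bdd_below ((\<lambda>a. dist v a) ` C)" by (rule bdd_belowI[of _ 0]) auto
  have "(INF a\<in>C. dist v a) = infdist v C" using assms(1) infdist_notempty by metis
  hence "(INF a\<in>C. dist v a) < infdist v C + e" using assms(2) by linarith
  then obtain y where "y \<in> C" "dist v y < infdist v C + e"
    using cINF_less_iff[OF assms(1) bdd] by blast
  thus ?thesis by (auto simp: dist_norm)
qed

lemma mid_far:
  fixes C :: "'a::real_inner set"
  assumes "convex C" "p \<in> C" "q \<in> C"
  shows "infdist v C \<le> norm (v - (1/2) *\<^sub>R (p + q))"
proof -
  have "(1/2) *\<^sub>R (p + q) = (1/2::real) *\<^sub>R p + (1/2::real) *\<^sub>R q" by (simp add: scaleR_right_distrib)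
  also have "\<dots> \<in> C" using convexD[OF assms, of "1/2" "1/2"] by simp
  finally have "(1/2) *\<^sub>R (p + q) \<in> C" .
  from infdist_le[OF this, of v] show ?thesis by (simp add: dist_norm)
qed
lemma par2:
  fixes v p q :: "'a::real_inner"
  shows "(norm (p - q))\<^sup>2 = 2 * (norm (v - p))\<^sup>2 + 2 * (norm (v - q))\<^sup>2 - 4 * (norm (v - (1/2) *\<^sub>R (p + q)))\<^sup>2"
proof -
  have "(1/2) *\<^sub>R ((v - p) + (v - q)) = (1/2) *\<^sub>R (v + v) - (1/2) *\<^sub>R (p + q)"
    by (simp only: scaleR_right_diff_distrib[symmetric]) (simp add: algebra_simps)
  hence e: "v - (1/2) *\<^sub>R (p + q) = (1/2) *\<^sub>R ((v - p) + (v - q))" by simp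
  have "(norm (v - (1/2) *\<^sub>R (p + q)))\<^sup>2 = (1/4) * (norm ((v - p) + (v - q)))\<^sup>2"
    unfolding e by (simp add: power2_eq_square)
  moreover have "p - q = (v - q) - (v - p)" by simp
  ultimately show ?thesis using parallelogram[of "v - q" "v - p"] by (simp add: algebra_simps)
qed

lemma close_pair:
  fixes C :: "'a::real_inner set"
  assumes "convex C" "p \<in> C" "q \<in> C" "e1 \<ge> 0" "e2 \<ge> 0"
    and "norm (v - p) \<le> infdist v C + e1" "norm (v - q) \<le> infdist v C + e2"
    and "e1 \<le> 1" "e2 \<le> 1"
  shows "(norm (p - q))\<^sup>2 \<le> 2 * (2 * infdist v C + 1) * (e1 + e2)"
proof -
  define d where "d = infdist v C"
  have d0: "d \<ge> 0" by (simp add: d_def infdist_nonneg)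
  have m: "d \<le> norm (v - (1/2) *\<^sub>R (p + q))" using mid_far[OF assms(1-3)] d_def by simp
  have m2: "d\<^sup>2 \<le> (norm (v - (1/2) *\<^sub>R (p + q)))\<^sup>2" using m d0 by (simp add: power_mono)
  have a: "(norm (v - p))\<^sup>2 \<le> (d + e1)\<^sup>2" using assms(6) d_def by (simp add: power_mono)
  have b: "(norm (v - q))\<^sup>2 \<le> (d + e2)\<^sup>2" using assms(7) d_def by (simp add: power_mono)
  have "(d + e1)\<^sup>2 \<le> d\<^sup>2 + (2*d+1)*e1" using assms d0
    by (simp add: power2_eq_square algebra_simps) (simp add: mult_left_le)
  moreover have "(d + e2)\<^sup>2 \<le> d\<^sup>2 + (2*d+1)*e2" using assms d0
    by (simp add: power2_eq_square algebra_simps) (simp add: mult_left_le)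
  ultimately show ?thesis using par2[of p q v] a b m2 d_def by (simp add: algebra_simps)
qed

lemma proj_exists:
  fixes C :: "'a::{real_inner,complete_space} set"
  assumes "closed C" "convex C" "C \<noteq> {}"
  shows "\<exists>p\<in>C. \<forall>y\<in>C. norm (v - p) \<le> norm (v - y)"
proof -
  define d where "d = infdist v C"
  have "\<forall>n::nat. \<exists>y\<in>C. norm (v - y) < d + 1 / (real n + 1)"
    using near_point[OF assms(3)] d_def by simp
  then obtain Y where Y: "\<And>n. Y n \<in> C" "\<And>n. norm (v - Y n) < d + 1 / (real n + 1)"
    by metis
  have d0: "d \<ge> 0" by (simp add: d_def infdist_nonneg)
  have cl: "(norm (Y m - Y n))\<^sup>2 \<le> 2 * (2 * d + 1) * (1 / (real m + 1) + 1 / (real n + 1))" for m n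
    using close_pair[OF assms(2) Y(1) Y(1), of "1 / (real m + 1)" "1 / (real n + 1)" v] Y(2)[of m] Y(2)[of n]
    by (simp add: d_def less_imp_le)
  have "Cauchy Y"
  proof (rule metric_CauchyI)
    fix e :: real assume e: "e > 0"
    obtain N :: nat where N0: "4 * (2 * d + 1) / (e\<^sup>2) < real N"
      using reals_Archimedean2 by blast
    hence N: "4 * (2 * d + 1) / (e\<^sup>2) < real N + 1" by linarith
    have N': "4 * (2 * d + 1) / (real N + 1) < e\<^sup>2"
      using N e by (simp add: field_simps)
    show "\<exists>M. \<forall>m\<ge>M. \<forall>n\<ge>M. dist (Y m) (Y n) < e"
    proof (intro exI allI impI)
      fix m n assume mn: "N \<le> m" "N \<le> n"
      have i1: "1 / (real m + 1) \<le> 1 / (real N + 1)" using mn by (simp add: frac_le)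
      have i2: "1 / (real n + 1) \<le> 1 / (real N + 1)" using mn by (simp add: frac_le)
      have "2 * (2 * d + 1) * (1 / (real m + 1) + 1 / (real n + 1)) \<le> 2 * (2 * d + 1) * (1 / (real N + 1) + 1 / (real N + 1))"
        by (rule mult_left_mono) (use i1 i2 d0 in auto)
      with cl[of m n] have "(norm (Y m - Y n))\<^sup>2 \<le> 2 * (2 * d + 1) * (1 / (real N + 1) + 1 / (real N + 1))"
        by linarith
      also have "\<dots> = 4 * (2 * d + 1) / (real N + 1)" by simp
      finally have "(norm (Y m - Y n))\<^sup>2 < e\<^sup>2" using N' by simp
      hence "norm (Y m - Y n) < e" using e by (meson power_less_imp_less_base less_imp_le)
      thus "dist (Y m) (Y n) < e" by (simp add: dist_norm)
    qed
  qed
  then obtain p where p: "Y \<longlonglongrightarrow> p" using Cauchy_convergent_iff convergent_def by blast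
  have pC: "p \<in> C" using closed_sequentially[OF assms(1)] Y(1) p by blast
  have lim1: "(\<lambda>n. norm (v - Y n)) \<longlonglongrightarrow> norm (v - p)" by (intro tendsto_intros p)
  have lim2: "(\<lambda>n. d + 1 / (real n + 1)) \<longlonglongrightarrow> d + 0"
    by (intro tendsto_intros) (use LIMSEQ_inverse_real_of_nat in \<open>simp add: inverse_eq_divide add.commute\<close>)
  have "norm (v - p) \<le> d + 0"
    by (rule LIMSEQ_le[OF lim1 lim2]) (use Y(2) less_imp_le in blast)
  moreover have "\<forall>y\<in>C. d \<le> norm (v - y)" using infdist_le[of _ C v] by (simp add: d_def dist_norm)
  ultimately have "\<forall>y\<in>C. norm (v - p) \<le> norm (v - y)" by fastforce
  thus ?thesis using pC by blast
qed



lemma proj_unique: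
  fixes C :: "'a::real_inner set"
  assumes "convex C" "p \<in> C" "q \<in> C"
    and "\<forall>y\<in>C. norm (v - p) \<le> norm (v - y)" "\<forall>y\<in>C. norm (v - q) \<le> norm (v - y)"
  shows "p = q"
proof -
  have mC: "(1/2) *\<^sub>R (p + q) \<in> C"
  proof -
    have "(1/2) *\<^sub>R (p + q) = (1/2::real) *\<^sub>R p + (1/2::real) *\<^sub>R q" by (simp add: scaleR_right_distrib)
    also have "\<dots> \<in> C" using convexD[OF assms(1-3), of "1/2" "1/2"] by simp
    finally show ?thesis .
  qed
  have eq: "norm (v - p) = norm (v - q)" using assms by (meson antisym)
  have m: "norm (v - p) \<le> norm (v - (1/2) *\<^sub>R (p + q))" using assms(4) mC by blast
  hence "(norm (v - p))\<^sup>2 \<le> (norm (v - (1/2) *\<^sub>R (p + q)))\<^sup>2" by (simp add: power_mono)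
  moreover have "(norm (v - q))\<^sup>2 = (norm (v - p))\<^sup>2" using eq by simp
  ultimately have "(norm (p - q))\<^sup>2 \<le> 0" using par2[of p q v] by linarith
  thus ?thesis by simp
qed

lemma metric_proj:
  fixes C :: "'a::{real_inner,complete_space} set"
  assumes "closed C" "convex C" "C \<noteq> {}"
  shows "metric_proj C v \<in> C" "\<forall>y\<in>C. norm (v - metric_proj C v) \<le> norm (v - y)"
proof -
  obtain p where p: "p \<in> C" "\<forall>y\<in>C. norm (v - p) \<le> norm (v - y)" using proj_exists[OF assms] by blast
  have "\<exists>!p. p \<in> C \<and> (\<forall>y\<in>C. norm (v - p) \<le> norm (v - y))"
    using p proj_unique[OF assms(2)] by blast
  hence "metric_proj C v \<in> C \<and> (\<forall>y\<in>C. norm (v - metric_proj C v) \<le> norm (v - y))"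
    unfolding metric_proj_def by (rule theI')
  thus "metric_proj C v \<in> C" "\<forall>y\<in>C. norm (v - metric_proj C v) \<le> norm (v - y)" by auto
qed

lemma norm_sq_expand:
  fixes a b :: "'a::real_inner"
  shows "(norm (a - u *\<^sub>R b))\<^sup>2 = (norm a)\<^sup>2 - 2 * u * inner a b + u\<^sup>2 * (norm b)\<^sup>2"
  unfolding power2_norm_eq_inner by (simp add: inner_simps inner_commute power2_eq_square algebra_simps)

lemma min_vi:
  fixes C :: "'a::real_inner set"
  assumes "convex C" "p \<in> C" "y \<in> C" "\<forall>y\<in>C. norm (v - p) \<le> norm (v - y)"
  shows "inner (v - p) (y - p) \<le> 0"
proof (rule ccontr)
  define s where "s = inner (v - p) (y - p)"
  define n where "n = (norm (y - p))\<^sup>2"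
  assume "\<not> inner (v - p) (y - p) \<le> 0"
  hence s: "s > 0" by (simp add: s_def)
  have n: "n > 0"
  proof -
    have "y \<noteq> p" using s by (auto simp: s_def)
    thus ?thesis by (simp add: n_def)
  qed
  define u where "u = min 1 (s / n)"
  have u0: "u > 0" using s n by (simp add: u_def)
  have u1: "u \<le> 1" by (simp add: u_def)
  have us: "u * n \<le> s" using n by (simp add: u_def min_def field_simps)
  have qC: "(1 - u) *\<^sub>R p + u *\<^sub>R y \<in> C" using convexD[OF assms(1-3), of "1 - u" u] u0 u1 by simp
  have qe: "v - ((1 - u) *\<^sub>R p + u *\<^sub>R y) = (v - p) - u *\<^sub>R (y - p)" by (simp add: algebra_simps)
  have "(norm (v - ((1 - u) *\<^sub>R p + u *\<^sub>R y)))\<^sup>2 = (norm (v - p))\<^sup>2 - 2 * u * s + u\<^sup>2 * n"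
    unfolding qe s_def n_def by (rule norm_sq_expand)
  also have "\<dots> \<le> (norm (v - p))\<^sup>2 - u * s"
  proof -
    have "u\<^sup>2 * n = u * (u * n)" by (simp add: power2_eq_square)
    also have "\<dots> \<le> u * s" using us u0 by (simp add: mult_left_mono)
    finally show ?thesis by linarith
  qed
  also have "\<dots> < (norm (v - p))\<^sup>2" using u0 s by simp
  finally have "norm (v - ((1 - u) *\<^sub>R p + u *\<^sub>R y)) < norm (v - p)"
    by (simp add: power_less_imp_less_base)
  thus False using assms(4) qC by fastforce
qed

lemma proj_vi:
  fixes C :: "'a::{real_inner,complete_space} set"
  assumes "closed C" "convex C" "C \<noteq> {}" "y \<in> C"
  shows "inner (v - metric_proj C v) (y - metric_proj C v) \<le> 0"
  using min_vi[OF assms(2) metric_proj(1)[OF assms(1-3)] assms(4) metric_proj(2)[OF assms(1-3)]] .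



lemma ogp_step_aux:
  fixes xt xt' x a h u :: "'a::real_inner"
  assumes "inner (xt - \<eta> *\<^sub>R a - xt') (u - xt') \<le> 0"
    and "inner (xt - \<eta> *\<^sub>R h - x) (xt' - x) \<le> 0"
  shows "2 * (\<eta> * inner a (x - u)) \<le> \<eta>\<^sup>2 * (norm (a - h))\<^sup>2 + ((norm (xt - u))\<^sup>2 - (norm (xt' - u))\<^sup>2)"
proof -
  have K: "0 \<le> (norm (\<eta> *\<^sub>R (a - h) - (x - xt')))\<^sup>2" by simp
  have K2: "0 \<le> inner (xt - x) (xt - x)" by simp
  show ?thesis using assms K K2
    unfolding power2_norm_eq_inner
    by (simp add: inner_simps inner_commute algebra_simps power2_eq_square)
qed


lemma telescope:
  fixes A B D :: "nat \<Rightarrow> real"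
  assumes "T \<ge> 1" "A 1 \<le> r" "\<And>t. 1 \<le> t \<Longrightarrow> t < T \<Longrightarrow> A (Suc t) - B t \<le> D (Suc t)"
    and "\<And>t. 0 \<le> B t"
  shows "(\<Sum>t=1..T. A t - B t) \<le> r + (\<Sum>t=2..T. D t)"
proof -
  have main: "Suc n \<le> T \<Longrightarrow> (\<Sum>t=1..Suc n. A t - B t) + B (Suc n) \<le> r + (\<Sum>t=2..Suc n. D t)" for n
  proof (induction n)
    case 0
    thus ?case using assms(2) by simp
  next
    case (Suc n)
    have IH: "(\<Sum>t=1..Suc n. A t - B t) + B (Suc n) \<le> r + (\<Sum>t=2..Suc n. D t)"
      using Suc by simp
    have st: "A (Suc (Suc n)) - B (Suc n) \<le> D (Suc (Suc n))" using assms(3)[of "Suc n"] Suc.prems by simp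
    have e1: "(\<Sum>t=1..Suc (Suc n). A t - B t) = (\<Sum>t=1..Suc n. A t - B t) + (A (Suc (Suc n)) - B (Suc (Suc n)))"
      by simp
    have e2: "(\<Sum>t=2..Suc (Suc n). D t) = (\<Sum>t=2..Suc n. D t) + D (Suc (Suc n))"
      by simp
    show ?case using IH st e1 e2 by linarith
  qed
  obtain n where n: "T = Suc n" using assms(1) by (cases T) auto
  show ?thesis using main[of n] n assms(4)[of T] by simp
qed

lemma diam_sq:
  fixes C :: "'a::real_normed_vector set"
  assumes "bounded C" "p \<in> C" "q \<in> C" "r \<in> C"
  shows "(norm (p - q))\<^sup>2 - (norm (p - r))\<^sup>2 \<le> 2 * diameter C * norm (q - r)"
proof -
  define a where "a = norm (p - q)"
  define b where "b = norm (p - r)"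
  have ab: "\<bar>a - b\<bar> \<le> norm (q - r)"
    using norm_triangle_ineq3[of "p - q" "p - r"] by (simp add: a_def b_def norm_minus_commute)
  have a: "a \<le> diameter C" using diameter_bounded_bound[OF assms(1,2,3)] by (simp add: a_def dist_norm)
  have b: "b \<le> diameter C" using diameter_bounded_bound[OF assms(1,2,4)] by (simp add: b_def dist_norm)
  have "a\<^sup>2 - b\<^sup>2 = (a - b) * (a + b)" by (simp add: power2_eq_square algebra_simps)
  also have "\<dots> \<le> \<bar>a - b\<bar> * (a + b)" by (rule mult_right_mono) (auto simp: a_def b_def)
  also have "\<dots> \<le> norm (q - r) * (2 * diameter C)"
    by (rule mult_mono) (use ab a b in \<open>auto simp: a_def b_def\<close>)
  finally show ?thesis by (simp add: a_def b_def algebra_simps)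
qed

lemma ogp_regret:
  fixes C :: "'a::{real_inner,complete_space} set"
  assumes C: "closed C" "convex C" "C \<noteq> {}" "bounded C" and eta: "\<eta> > 0"
    and run: "ogp_run C \<eta> xs xh xt x" and T: "T \<ge> 1" and z: "\<forall>t\<in>{1..T}. z t \<in> C"
  shows "(\<Sum>t=1..T. inner (xs t) (x t - z t)) \<le> \<eta> / 2 * (\<Sum>t=1..T. (norm (xs t - xh t))\<^sup>2)
           + ((diameter C)\<^sup>2 + 2 * diameter C * (\<Sum>t=2..T. norm (z t - z (t - 1)))) / (2 * \<eta>)"
proof -
  define \<rho> where "\<rho> = diameter C"
  have r1: "xt 1 \<in> C" and r2: "\<And>t. t \<ge> 1 \<Longrightarrow> xt (Suc t) = metric_proj C (xt t - \<eta> *\<^sub>R xs t)"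
    and r3: "\<And>t. t \<ge> 1 \<Longrightarrow> x t = metric_proj C (xt t - \<eta> *\<^sub>R xh t)"
    using run unfolding ogp_run_def by auto
  have xtC: "xt t \<in> C" if tt: "t \<ge> 1" for t
  proof (cases t)
    case 0 then show ?thesis using tt by simp
  next
    case (Suc n) show ?thesis
    proof (cases n)
      case 0 then show ?thesis using Suc r1 by simp
    next
      case (Suc m) then show ?thesis using \<open>t = Suc n\<close> r2[of n] metric_proj(1)[OF C(1-3)] by simp
    qed
  qed
  define A where "A t = (norm (xt t - z t))\<^sup>2" for t
  define B where "B t = (norm (xt (Suc t) - z t))\<^sup>2" for t
  define D where "D t = 2 * \<rho> * norm (z t - z (t - 1))" for t
  have step: "2 * (\<eta> * inner (xs t) (x t - z t)) \<le> \<eta>\<^sup>2 * (norm (xs t - xh t))\<^sup>2 + (A t - B t)"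
    if t: "t \<in> {1..T}" for t
  proof -
    have t1: "t \<ge> 1" using t by simp
    have v1: "inner (xt t - \<eta> *\<^sub>R xs t - xt (Suc t)) (z t - xt (Suc t)) \<le> 0"
      using proj_vi[OF C(1-3), of "z t" "xt t - \<eta> *\<^sub>R xs t"] z t r2[OF t1] by simp
    have v2: "inner (xt t - \<eta> *\<^sub>R xh t - x t) (xt (Suc t) - x t) \<le> 0"
      using proj_vi[OF C(1-3), of "xt (Suc t)" "xt t - \<eta> *\<^sub>R xh t"] xtC[of "Suc t"] r3[OF t1] by simp
    show ?thesis using ogp_step_aux[OF v1 v2] by (simp add: A_def B_def)
  qed
  have tel: "(\<Sum>t=1..T. A t - B t) \<le> \<rho>\<^sup>2 + (\<Sum>t=2..T. D t)"
  proof (rule telescope[OF T])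
    have "norm (xt 1 - z 1) \<le> \<rho>" using diameter_bounded_bound[OF C(4) r1, of "z 1"] z T
      by (simp add: \<rho>_def dist_norm)
    thus "A 1 \<le> \<rho>\<^sup>2" unfolding A_def by (simp add: power_mono)
  next
    fix t assume t: "1 \<le> t" "t < T"
    have "A (Suc t) - B t \<le> 2 * diameter C * norm (z (Suc t) - z t)"
      unfolding A_def B_def
      by (rule diam_sq[OF C(4) xtC]) (use t z in auto)
    thus "A (Suc t) - B t \<le> D (Suc t)" by (simp add: D_def \<rho>_def)
  next
    fix t show "0 \<le> B t" by (simp add: B_def)
  qed
  have "2 * \<eta> * (\<Sum>t=1..T. inner (xs t) (x t - z t)) = (\<Sum>t=1..T. 2 * (\<eta> * inner (xs t) (x t - z t)))"
    by (simp add: sum_distrib_left mult.assoc)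
  also have "\<dots> \<le> (\<Sum>t=1..T. \<eta>\<^sup>2 * (norm (xs t - xh t))\<^sup>2 + (A t - B t))"
    by (rule sum_mono) (rule step)
  also have "\<dots> = \<eta>\<^sup>2 * (\<Sum>t=1..T. (norm (xs t - xh t))\<^sup>2) + (\<Sum>t=1..T. A t - B t)"
    by (simp add: sum.distrib sum_distrib_left)
  also have "\<dots> \<le> \<eta>\<^sup>2 * (\<Sum>t=1..T. (norm (xs t - xh t))\<^sup>2) + (\<rho>\<^sup>2 + 2 * \<rho> * (\<Sum>t=2..T. norm (z t - z (t - 1))))"
    using tel by (simp add: D_def sum_distrib_left)
  finally have "2 * \<eta> * (\<Sum>t=1..T. inner (xs t) (x t - z t)) \<le> \<eta>\<^sup>2 * (\<Sum>t=1..T. (norm (xs t - xh t))\<^sup>2) + (\<rho>\<^sup>2 + 2 * \<rho> * (\<Sum>t=2..T. norm (z t - z (t - 1))))" .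
  thus ?thesis using eta unfolding \<rho>_def by (simp add: field_simps power2_eq_square)
qed



lemma exp_quad:
  fixes y :: real
  assumes "\<bar>y\<bar> \<le> 1"
  shows "exp y \<le> 1 + y + y\<^sup>2"
proof (cases "y \<ge> 0")
  case True thus ?thesis using exp_bound[of y] assms by simp
next
  case False
  define x where "x = - y"
  have x: "0 \<le> x" "x \<le> 1" using False assms by (auto simp: x_def)
  have lo: "1 + x + x\<^sup>2 / 2 \<le> exp x" using exp_lower_Taylor_quadratic[OF x(1)] .
  have pos: "0 < 1 + x + x\<^sup>2 / 2" using x by (simp add: add_pos_nonneg)
  have prod: "1 \<le> (1 - x + x\<^sup>2) * (1 + x + x\<^sup>2 / 2)"
  proof -
    have "(1 - x + x\<^sup>2) * (1 + x + x\<^sup>2 / 2) = 1 + x\<^sup>2/2 + x^3/2 + x^4/2"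
      by (simp add: power2_eq_square power3_eq_cube power4_eq_xxxx field_simps)
    moreover have "0 \<le> x\<^sup>2/2 + x^3/2 + x^4/2" using x by simp
    ultimately show ?thesis by linarith
  qed
  have q0: "0 \<le> 1 - x + x\<^sup>2" using x by (simp add: power2_eq_square)
  have "1 \<le> (1 - x + x\<^sup>2) * exp x"
    using prod mult_left_mono[OF lo q0] by linarith
  hence "exp (-x) \<le> 1 - x + x\<^sup>2" by (simp add: exp_minus field_simps)
  thus ?thesis by (simp add: x_def)
qed

lemma hedge_aux:
  fixes E :: "nat set" and w y :: "nat \<Rightarrow> real"
  assumes "finite E" "\<forall>j\<in>E. w j \<ge> 0" "(\<Sum>j\<in>E. w j) = 1" "\<forall>j\<in>E. \<bar>y j\<bar> \<le> a"
  shows "ln (\<Sum>j\<in>E. w j * exp (y j)) \<le> (\<Sum>j\<in>E. w j * y j) + 2 * a\<^sup>2"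
proof -
  define m where "m = (\<Sum>j\<in>E. w j * y j)"
  have lowS: "exp (- a) \<le> (\<Sum>j\<in>E. w j * exp (y j))"
  proof -
    have "exp (-a) = (\<Sum>j\<in>E. w j * exp (-a))" using assms(3) by (simp add: sum_distrib_right[symmetric])
    also have "\<dots> \<le> (\<Sum>j\<in>E. w j * exp (y j))"
      by (rule sum_mono, rule mult_left_mono) (use assms(2,4) in auto)
    finally show ?thesis .
  qed
  have Spos: "0 < (\<Sum>j\<in>E. w j * exp (y j))" using lowS by (meson exp_gt_zero less_le_trans)
  have mlow: "- a \<le> m"
  proof -
    have "- a = (\<Sum>j\<in>E. w j * (-a))" using assms(3) by (simp add: sum_negf sum_distrib_right[symmetric])
    also have "\<dots> \<le> m" unfolding m_def
      by (rule sum_mono, rule mult_left_mono) (use assms(2,4) in auto)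
    finally show ?thesis .
  qed
  show ?thesis
  proof (cases "a \<ge> 1")
    case True
    have "(\<Sum>j\<in>E. w j * exp (y j)) \<le> (\<Sum>j\<in>E. w j * exp a)"
      by (rule sum_mono, rule mult_left_mono) (use assms(2,4) in auto)
    also have "\<dots> = exp a" using assms(3) by (simp add: sum_distrib_right[symmetric])
    finally have "ln (\<Sum>j\<in>E. w j * exp (y j)) \<le> ln (exp a)" using Spos by (rule ln_mono)
    hence "ln (\<Sum>j\<in>E. w j * exp (y j)) \<le> a" by simp
    moreover have "a \<le> a * a" using True by simp
    ultimately show ?thesis using mlow by (simp add: m_def power2_eq_square)
  next
    case False
    have "(\<Sum>j\<in>E. w j * exp (y j)) \<le> (\<Sum>j\<in>E. w j * (1 + y j + a\<^sup>2))"
    proof (rule sum_mono, rule mult_left_mono)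
      fix j assume j: "j \<in> E"
      have ya: "\<bar>y j\<bar> \<le> a" using assms(4) j by auto
      have "exp (y j) \<le> 1 + y j + (y j)\<^sup>2" by (rule exp_quad) (use ya False in linarith)
      also have "(y j)\<^sup>2 \<le> a\<^sup>2" using power_mono[OF ya abs_ge_zero[of "y j"], of 2] by simp
      finally show "exp (y j) \<le> 1 + y j + a\<^sup>2" by simp
      show "0 \<le> w j" using assms(2) j by auto
    qed
    also have "\<dots> = 1 + m + a\<^sup>2"
      using assms(3) by (simp add: m_def algebra_simps sum.distrib sum_distrib_right[symmetric])
    finally have le: "(\<Sum>j\<in>E. w j * exp (y j)) \<le> 1 + m + a\<^sup>2" .
    have "ln (\<Sum>j\<in>E. w j * exp (y j)) \<le> ln (1 + m + a\<^sup>2)" using le Spos by simp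
    also have "\<dots> \<le> m + a\<^sup>2" using ln_le_minus_one[of "1 + m + a\<^sup>2"] le Spos by linarith
    finally have "ln (\<Sum>j\<in>E. w j * exp (y j)) \<le> m + a\<^sup>2" .
    moreover have "0 \<le> a\<^sup>2" by simp
    ultimately show ?thesis unfolding m_def by linarith
  qed
qed



lemma ones_regret:
  fixes E :: "nat set"
  assumes fin: "finite E" and iE: "i \<in> E" and th: "\<theta> > 0"
    and run: "ones_run E \<theta> w1 l lh wt w"
    and w1p: "\<forall>j\<in>E. w1 j > 0" and w1s: "(\<Sum>j\<in>E. w1 j) = 1"
    and D: "\<And>t j. j \<in> E \<Longrightarrow> \<bar>l t j - lh t j\<bar> \<le> D t"
  shows "\<theta> * (\<Sum>t=1..T. (\<Sum>j\<in>E. w t j * l t j) - l t i) \<le> - ln (w1 i) + 2 * \<theta>\<^sup>2 * (\<Sum>t=1..T. (D t)\<^sup>2)"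
proof -
  have r1: "\<And>j. j \<in> E \<Longrightarrow> wt 1 j = w1 j"
    and r2: "\<And>t j. t \<ge> 1 \<Longrightarrow> j \<in> E \<Longrightarrow> wt (Suc t) j =
        wt t j * exp (- \<theta> * l t j) / (\<Sum>j\<in>E. wt t j * exp (- \<theta> * l t j))"
    and r3: "\<And>t j. t \<ge> 1 \<Longrightarrow> j \<in> E \<Longrightarrow> w t j =
        wt t j * exp (- \<theta> * lh t j) / (\<Sum>j\<in>E. wt t j * exp (- \<theta> * lh t j))"
    using run unfolding ones_run_def by auto
  have Ene: "E \<noteq> {}" using iE by auto
  define Z where "Z t = (\<Sum>j\<in>E. wt t j * exp (- \<theta> * l t j))" for t
  define A where "A t = (\<Sum>j\<in>E. wt t j * exp (- \<theta> * lh t j))" for t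
  have pos: "(\<forall>j\<in>E. wt t j > 0) \<and> (\<Sum>j\<in>E. wt t j) = 1" if "t \<ge> 1" for t
    using that
  proof (induction t rule: dec_induct)
    case base thus ?case using r1 w1p w1s by simp
  next
    case (step t)
    have Zp: "Z t > 0" unfolding Z_def by (rule sum_pos[OF fin Ene]) (use step.IH in simp)
    have "\<forall>j\<in>E. wt (Suc t) j > 0"
    proof
      fix j assume j: "j \<in> E"
      have "wt (Suc t) j = wt t j * exp (- \<theta> * l t j) / Z t" using r2[OF step.hyps(1) j] by (simp add: Z_def)
      thus "wt (Suc t) j > 0" using step.IH j Zp by simp
    qed
    moreover have "(\<Sum>j\<in>E. wt (Suc t) j) = 1"
    proof -
      have "(\<Sum>j\<in>E. wt (Suc t) j) = (\<Sum>j\<in>E. wt t j * exp (- \<theta> * l t j) / Z t)"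
        using r2[OF step.hyps(1)] by (simp add: Z_def)
      also have "\<dots> = Z t / Z t" by (simp only: Z_def sum_divide_distrib)
      finally show ?thesis using Zp by simp
    qed
    ultimately show ?case by simp
  qed
  have Zp: "Z t > 0" if "t \<ge> 1" for t
    unfolding Z_def by (rule sum_pos[OF fin Ene]) (use pos[OF that] in simp)
  have Ap: "A t > 0" if "t \<ge> 1" for t
    unfolding A_def by (rule sum_pos[OF fin Ene]) (use pos[OF that] in simp)
  have wdef: "w t j = wt t j * exp (- \<theta> * lh t j) / A t" if "t \<ge> 1" "j \<in> E" for t j
    using r3[OF that] by (simp add: A_def)
  have wp: "w t j > 0" if "t \<ge> 1" "j \<in> E" for t j
    using wdef[OF that] pos[OF that(1)] Ap[OF that(1)] that(2) by simp
  have ws: "(\<Sum>j\<in>E. w t j) = 1" if "t \<ge> 1" for t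
  proof -
    have "(\<Sum>j\<in>E. w t j) = (\<Sum>j\<in>E. wt t j * exp (- \<theta> * lh t j) / A t)"
      using wdef[OF that] by simp
    also have "\<dots> = A t / A t" by (simp only: A_def sum_divide_distrib)
    finally show ?thesis using Ap[OF that] by simp
  qed
  have stepZ: "ln (Z t) \<le> - \<theta> * (\<Sum>j\<in>E. w t j * l t j) + 2 * \<theta>\<^sup>2 * (D t)\<^sup>2" if t: "t \<ge> 1" for t
  proof -
    define B where "B = (\<Sum>j\<in>E. w t j * exp (- \<theta> * (l t j - lh t j)))"
    have wA: "w t j * A t = wt t j * exp (- \<theta> * lh t j)" if "j \<in> E" for j
      using wdef[OF t that] Ap[OF t] by simp
    have ZAB: "Z t = A t * B"
    proof -
      have "Z t = (\<Sum>j\<in>E. (w t j * A t) * exp (- \<theta> * (l t j - lh t j)))"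
        unfolding Z_def
      proof (rule sum.cong[OF refl])
        fix j assume j: "j \<in> E"
        have "exp (- \<theta> * l t j) = exp (- \<theta> * lh t j) * exp (- \<theta> * (l t j - lh t j))"
          by (simp add: exp_add[symmetric] algebra_simps)
        thus "wt t j * exp (- \<theta> * l t j) = (w t j * A t) * exp (- \<theta> * (l t j - lh t j))"
          using wA[OF j] by simp
      qed
      also have "\<dots> = A t * B" by (simp add: B_def sum_distrib_left algebra_simps)
      finally show ?thesis .
    qed
    have Bp: "B > 0" using ZAB Zp[OF t] Ap[OF t] by (simp add: zero_less_mult_iff)
    have lnB: "ln B \<le> (\<Sum>j\<in>E. w t j * (- \<theta> * (l t j - lh t j))) + 2 * (\<theta> * D t)\<^sup>2"
      unfolding B_def
    proof (rule hedge_aux[OF fin])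
      show "\<forall>j\<in>E. 0 \<le> w t j" using wp[OF t] by (simp add: less_imp_le)
      show "sum (w t) E = 1" using ws[OF t] .
      show "\<forall>j\<in>E. \<bar>- \<theta> * (l t j - lh t j)\<bar> \<le> \<theta> * D t"
        using D th by (simp add: abs_mult)
    qed
    have lnA: "ln (A t) + \<theta> * (\<Sum>j\<in>E. w t j * lh t j) \<le> 0"
    proof -
      have "(\<Sum>j\<in>E. w t j * ln (A t * exp (\<theta> * lh t j))) \<le> (\<Sum>j\<in>E. w t j * (A t * exp (\<theta> * lh t j) - 1))"
      proof (rule sum_mono, rule mult_left_mono)
        fix j assume "j \<in> E"
        show "ln (A t * exp (\<theta> * lh t j)) \<le> A t * exp (\<theta> * lh t j) - 1"
          by (rule ln_le_minus_one) (use Ap[OF t] in simp)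
        show "0 \<le> w t j" using wp[OF t \<open>j \<in> E\<close>] by simp
      qed
      also have "\<dots> = (\<Sum>j\<in>E. wt t j - w t j)"
      proof (rule sum.cong[OF refl])
        fix j assume j: "j \<in> E"
        have "w t j * (A t * exp (\<theta> * lh t j)) = wt t j * exp (- \<theta> * lh t j) * exp (\<theta> * lh t j)"
          using wA[OF j] by (simp add: mult.assoc[symmetric] mult.commute[of "w t j"])
        also have "\<dots> = wt t j" by (simp add: mult.assoc exp_add[symmetric])
        finally show "w t j * (A t * exp (\<theta> * lh t j) - 1) = wt t j - w t j"
          by (simp add: right_diff_distrib)
      qed
      also have "\<dots> = 0" using pos[OF t] ws[OF t] by (simp add: sum_subtractf)
      also have "(\<Sum>j\<in>E. w t j * ln (A t * exp (\<theta> * lh t j))) = ln (A t) + \<theta> * (\<Sum>j\<in>E. w t j * lh t j)"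
      proof -
        have "(\<Sum>j\<in>E. w t j * ln (A t * exp (\<theta> * lh t j))) = (\<Sum>j\<in>E. w t j * ln (A t) + \<theta> * (w t j * lh t j))"
          using Ap[OF t] by (intro sum.cong refl) (simp add: ln_mult algebra_simps)
        also have "\<dots> = ln (A t) * (\<Sum>j\<in>E. w t j) + \<theta> * (\<Sum>j\<in>E. w t j * lh t j)"
          by (simp add: sum.distrib sum_distrib_left sum_distrib_right mult.commute)
        finally show ?thesis using ws[OF t] by simp
      qed
      finally show ?thesis by simp
    qed
    have "ln (Z t) = ln (A t) + ln B" using ZAB Ap[OF t] Bp by (simp add: ln_mult)
    also have "(\<Sum>j\<in>E. w t j * (- \<theta> * (l t j - lh t j))) = - \<theta> * (\<Sum>j\<in>E. w t j * l t j) + \<theta> * (\<Sum>j\<in>E. w t j * lh t j)"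
    proof -
      have "(\<Sum>j\<in>E. w t j * (- \<theta> * (l t j - lh t j))) = (\<Sum>j\<in>E. \<theta> * (w t j * lh t j) - \<theta> * (w t j * l t j))"
        by (rule sum.cong) (simp_all add: algebra_simps)
      also have "\<dots> = \<theta> * (\<Sum>j\<in>E. w t j * lh t j) - \<theta> * (\<Sum>j\<in>E. w t j * l t j)"
        by (simp only: sum_subtractf sum_distrib_left)
      finally show ?thesis by simp
    qed
    moreover have "(\<theta> * D t)\<^sup>2 = \<theta>\<^sup>2 * (D t)\<^sup>2" by (simp add: power_mult_distrib)
    ultimately show ?thesis using lnA lnB by linarith
  qed
  have lnwt: "ln (wt (Suc t) i) = ln (wt t i) - \<theta> * l t i - ln (Z t)" if t: "t \<ge> 1" for t
  proof -
    have "wt (Suc t) i = wt t i * exp (- \<theta> * l t i) / Z t" using r2[OF t iE] by (simp add: Z_def)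
    moreover have "wt t i > 0" using pos[OF t] iE by simp
    ultimately show ?thesis using Zp[OF t] by (simp add: ln_div ln_mult)
  qed
  have cum: "ln (wt (Suc n) i) = ln (w1 i) - (\<Sum>t=1..n. \<theta> * l t i + ln (Z t))" for n
  proof (induction n)
    case 0 thus ?case using r1[OF iE] by simp
  next
    case (Suc n)
    show ?case using lnwt[of "Suc n"] Suc.IH by simp
  qed
  have le1: "wt (Suc T) i \<le> 1"
    using member_le_sum[OF iE _ fin, of "wt (Suc T)"] pos[of "Suc T"] by (simp add: less_imp_le)
  have "ln (wt (Suc T) i) \<le> 0" using le1 pos[of "Suc T"] iE by simp
  hence key: "ln (w1 i) \<le> (\<Sum>t=1..T. \<theta> * l t i + ln (Z t))" using cum[of T] by simp
  have "\<theta> * (\<Sum>t=1..T. (\<Sum>j\<in>E. w t j * l t j) - l t i) = (\<Sum>t=1..T. \<theta> * (\<Sum>j\<in>E. w t j * l t j) - \<theta> * l t i)"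
    by (simp add: sum_distrib_left right_diff_distrib)
  also have "\<dots> \<le> (\<Sum>t=1..T. - ln (Z t) + 2 * \<theta>\<^sup>2 * (D t)\<^sup>2 - \<theta> * l t i)"
    by (rule sum_mono) (use stepZ in force)
  also have "\<dots> = 2 * \<theta>\<^sup>2 * (\<Sum>t=1..T. (D t)\<^sup>2) - (\<Sum>t=1..T. \<theta> * l t i + ln (Z t))"
    by (simp add: sum.distrib sum_subtractf sum_distrib_left algebra_simps)
  finally show ?thesis using key by linarith
qed



lemma zeta_bound:
  fixes E :: "nat set"
  assumes "\<alpha> > 1" "zeta_real \<alpha> \<le> 2" "finite E"
  shows "(\<Sum>j\<in>E. (real j + 2) powr (-\<alpha>)) \<le> 1"
proof -
  define f where "f n = 1 / (real (Suc n)) powr \<alpha>" for n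
  have s0: "summable (\<lambda>n. real n powr (-\<alpha>))" using summable_real_powr_iff assms(1) by simp
  have "summable (\<lambda>n. real (Suc n) powr (-\<alpha>))" using s0 summable_Suc_iff[of "\<lambda>n. real n powr (-\<alpha>)"] by simp
  hence sf: "summable f" unfolding f_def by (simp add: powr_minus_divide)
  have sf2: "summable (\<lambda>n. f (Suc n))" using sf summable_Suc_iff by blast
  have "(\<Sum>j\<in>E. (real j + 2) powr (-\<alpha>)) = (\<Sum>j\<in>E. f (Suc j))"
    by (rule sum.cong) (simp_all add: f_def powr_minus_divide add.commute)
  also have "\<dots> \<le> (\<Sum>n. f (Suc n))"
    by (rule sum_le_suminf[OF sf2 assms(3)]) (simp add: f_def)
  also have "\<dots> = suminf f - f 0" by (rule suminf_split_head[OF sf])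
  also have "\<dots> = zeta_real \<alpha> - 1" unfolding zeta_real_def f_def[abs_def] by simp
  finally show ?thesis using assms(2) by simp
qed

lemma choose_i:
  fixes s :: real
  assumes "s \<ge> 1"
  defines "i \<equiv> nat \<lfloor>log 2 s\<rfloor>"
  shows "2 ^ i \<le> s" "s < 2 * 2 ^ i"
proof -
  have l0: "log 2 s \<ge> 0" using assms(1) by simp
  have fl: "real_of_int \<lfloor>log 2 s\<rfloor> \<le> log 2 s" "log 2 s < real_of_int \<lfloor>log 2 s\<rfloor> + 1" by linarith+
  have ii: "real i = real_of_int \<lfloor>log 2 s\<rfloor>" using l0 by (simp add: i_def)
  have "(2::real) ^ i = 2 powr (real i)" by (simp add: powr_realpow)
  also have "\<dots> \<le> 2 powr (log 2 s)" using fl(1) ii by simp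
  also have "\<dots> = s" using assms by simp
  finally show "2 ^ i \<le> s" .
  have "s = 2 powr (log 2 s)" using assms by simp
  also have "\<dots> < 2 powr (real i + 1)" using fl(2) ii by simp
  also have "\<dots> = 2 * 2 ^ i" by (simp add: powr_add powr_realpow)
  finally show "s < 2 * 2 ^ i" .
qed

lemma choose_i_le:
  fixes s u :: real
  assumes "1 \<le> s" "s \<le> u"
  shows "nat \<lfloor>log 2 s\<rfloor> \<le> nat \<lfloor>log 2 u\<rfloor>"
proof -
  have "log 2 s \<le> log 2 u" using assms by simp
  hence "\<lfloor>log 2 s\<rfloor> \<le> \<lfloor>log 2 u\<rfloor>" by (rule floor_mono)
  thus ?thesis by simp
qed



lemma final_arith:
  fixes \<rho> G c \<alpha> M P s R meta expert \<eta> :: real and i :: nat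
  assumes pos: "\<rho> > 0" "G > 0" "c > 0" "\<alpha> > 0" "M > 0" "P \<ge> 0"
    and s: "s = sqrt (1 + 2 * P / \<rho>)" "2 ^ i \<le> s" "s < 2 * 2 ^ i"
    and R: "R \<le> meta + expert"
    and meta: "meta \<le> \<alpha> * (real i + 1) * sqrt M / c + 2 * c * \<rho>\<^sup>2 * G\<^sup>2 * sqrt M"
    and ex: "expert \<le> \<eta> * G\<^sup>2 * M / 2 + (\<rho>\<^sup>2 + 2 * \<rho> * P) / (2 * \<eta>)"
    and eta: "\<eta> = \<rho> / (G * sqrt M) * 2 ^ i"
  shows "R \<le> ((\<alpha> / c + 3 * \<rho> * G / 2 + 2 * c * \<rho>\<^sup>2 * G\<^sup>2) * sqrt (1 + 2 / \<rho>)) * sqrt ((1 + P) * M)"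
proof -
  define sM where "sM = sqrt M"
  define p :: real where "p = 2 ^ i"
  have sM: "sM > 0" "M = sM\<^sup>2" using pos by (auto simp: sM_def)
  have p: "p > 0" by (simp add: p_def)
  have s2: "s\<^sup>2 = 1 + 2 * P / \<rho>" using s(1) pos by simp
  have s1: "s \<ge> 1" using s(1) pos by simp
  have ip: "real i + 1 \<le> p"
  proof -
    have "i < 2 ^ i" by (rule less_exp)
    hence "Suc i \<le> 2 ^ i" by (rule Suc_leI)
    hence "real (Suc i) \<le> real (2 ^ i)" by (simp only: of_nat_le_iff)
    thus ?thesis by (simp add: p_def)
  qed
  have m2: "meta \<le> \<alpha> * s * sM / c + 2 * c * \<rho>\<^sup>2 * G\<^sup>2 * sM"
  proof -
    have "\<alpha> * (real i + 1) * sM / c \<le> \<alpha> * s * sM / c"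
      using ip s(2) pos sM by (simp add: p_def divide_right_mono mult_right_mono mult_left_mono)
    thus ?thesis using meta by (simp add: sM_def)
  qed
  have e1: "\<eta> * G\<^sup>2 * M / 2 = \<rho> * p * G * sM / 2"
    using sM pos unfolding eta p_def sM_def by (simp add: field_simps power2_eq_square)
  have e1': "\<rho> * p * G * sM / 2 \<le> \<rho> * s * G * sM / 2"
    using s(2) pos sM by (simp add: p_def mult_right_mono mult_left_mono)
  have e2: "(\<rho>\<^sup>2 + 2 * \<rho> * P) / (2 * \<eta>) = \<rho> * s\<^sup>2 * G * sM / (2 * p)"
    using sM pos p s2 unfolding eta p_def sM_def by (simp add: field_simps power2_eq_square)
  have e2': "\<rho> * s\<^sup>2 * G * sM / (2 * p) \<le> \<rho> * s * G * sM"
  proof -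
    have "s / (2 * p) \<le> 1" using s(3) p by (simp add: p_def)
    hence "(\<rho> * s * G * sM) * (s / (2 * p)) \<le> (\<rho> * s * G * sM) * 1"
      by (rule mult_left_mono) (use pos sM s1 in simp)
    thus ?thesis by (simp add: power2_eq_square field_simps)
  qed
  define K0 where "K0 = \<alpha> / c + 3 * \<rho> * G / 2 + 2 * c * \<rho>\<^sup>2 * G\<^sup>2"
  have "R \<le> s * sM * (\<alpha> / c + 3 * \<rho> * G / 2) + 2 * c * \<rho>\<^sup>2 * G\<^sup>2 * sM"
    using R m2 ex e1 e1' e2 e2' by (simp add: algebra_simps)
  also have "\<dots> \<le> s * sM * K0"
  proof -
    have "2 * c * \<rho>\<^sup>2 * G\<^sup>2 * sM \<le> s * sM * (2 * c * \<rho>\<^sup>2 * G\<^sup>2)"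
      using s1 sM pos by (simp add: mult_right_mono)
    thus ?thesis by (simp add: K0_def algebra_simps)
  qed
  also have "\<dots> \<le> (sqrt (1 + 2 / \<rho>) * sqrt (1 + P)) * sM * K0"
  proof -
    have "s\<^sup>2 \<le> (1 + 2 / \<rho>) * (1 + P)"
      using s2 pos by (simp add: field_simps)
    hence "sqrt (s\<^sup>2) \<le> sqrt ((1 + 2 / \<rho>) * (1 + P))" by (rule real_sqrt_le_mono)
    hence "s \<le> sqrt (1 + 2 / \<rho>) * sqrt (1 + P)" using s1 by (simp add: real_sqrt_mult)
    moreover have "0 \<le> sM * K0" using sM pos by (simp add: K0_def)
    ultimately show ?thesis by (metis mult.assoc mult_right_mono)
  qed
  also have "\<dots> = (K0 * sqrt (1 + 2 / \<rho>)) * sqrt ((1 + P) * M)"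
    by (simp add: sM_def real_sqrt_mult)
  finally show ?thesis by (simp add: K0_def)
qed



lemma ones_pos:
  fixes E :: "nat set"
  assumes fin: "finite E" and iE: "i \<in> E" and th: "\<theta> > 0"
    and run: "ones_run E \<theta> w1 l lh wt w"
    and w1p: "\<forall>j\<in>E. w1 j > 0" and w1s: "(\<Sum>j\<in>E. w1 j) = 1"
    and t1: "t0 \<ge> 1"
  shows "(\<forall>j\<in>E. w t0 j > 0) \<and> (\<Sum>j\<in>E. w t0 j) = 1"
proof -
  have r1: "\<And>j. j \<in> E \<Longrightarrow> wt 1 j = w1 j"
    and r2: "\<And>t j. t \<ge> 1 \<Longrightarrow> j \<in> E \<Longrightarrow> wt (Suc t) j =
        wt t j * exp (- \<theta> * l t j) / (\<Sum>j\<in>E. wt t j * exp (- \<theta> * l t j))"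
    and r3: "\<And>t j. t \<ge> 1 \<Longrightarrow> j \<in> E \<Longrightarrow> w t j =
        wt t j * exp (- \<theta> * lh t j) / (\<Sum>j\<in>E. wt t j * exp (- \<theta> * lh t j))"
    using run unfolding ones_run_def by auto
  have Ene: "E \<noteq> {}" using iE by auto
  define Z where "Z t = (\<Sum>j\<in>E. wt t j * exp (- \<theta> * l t j))" for t
  define A where "A t = (\<Sum>j\<in>E. wt t j * exp (- \<theta> * lh t j))" for t
  have pos: "(\<forall>j\<in>E. wt t j > 0) \<and> (\<Sum>j\<in>E. wt t j) = 1" if "t \<ge> 1" for t
    using that
  proof (induction t rule: dec_induct)
    case base thus ?case using r1 w1p w1s by simp
  next
    case (step t)
    have Zp: "Z t > 0" unfolding Z_def by (rule sum_pos[OF fin Ene]) (use step.IH in simp)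
    have "\<forall>j\<in>E. wt (Suc t) j > 0"
    proof
      fix j assume j: "j \<in> E"
      have "wt (Suc t) j = wt t j * exp (- \<theta> * l t j) / Z t" using r2[OF step.hyps(1) j] by (simp add: Z_def)
      thus "wt (Suc t) j > 0" using step.IH j Zp by simp
    qed
    moreover have "(\<Sum>j\<in>E. wt (Suc t) j) = 1"
    proof -
      have "(\<Sum>j\<in>E. wt (Suc t) j) = (\<Sum>j\<in>E. wt t j * exp (- \<theta> * l t j) / Z t)"
        using r2[OF step.hyps(1)] by (simp add: Z_def)
      also have "\<dots> = Z t / Z t" by (simp only: Z_def sum_divide_distrib)
      finally show ?thesis using Zp by simp
    qed
    ultimately show ?case by simp
  qed
  have Zp: "Z t > 0" if "t \<ge> 1" for t
    unfolding Z_def by (rule sum_pos[OF fin Ene]) (use pos[OF that] in simp)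
  have Ap: "A t > 0" if "t \<ge> 1" for t
    unfolding A_def by (rule sum_pos[OF fin Ene]) (use pos[OF that] in simp)
  have wdef: "w t j = wt t j * exp (- \<theta> * lh t j) / A t" if "t \<ge> 1" "j \<in> E" for t j
    using r3[OF that] by (simp add: A_def)
  have wp: "w t j > 0" if "t \<ge> 1" "j \<in> E" for t j
    using wdef[OF that] pos[OF that(1)] Ap[OF that(1)] that(2) by simp
  have ws: "(\<Sum>j\<in>E. w t j) = 1" if "t \<ge> 1" for t
  proof -
    have "(\<Sum>j\<in>E. w t j) = (\<Sum>j\<in>E. wt t j * exp (- \<theta> * lh t j) / A t)"
      using wdef[OF that] by simp
    also have "\<dots> = A t / A t" by (simp only: A_def sum_divide_distrib)
    finally show ?thesis using Ap[OF that] by simp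
  qed
  show ?thesis using wp[OF t1] ws[OF t1] by simp
qed

lemma subgrad_real:
  fixes f :: "'a::real_inner \<Rightarrow> ereal"
  assumes "g \<in> subdiff f x" "\<bar>f y\<bar> \<noteq> \<infinity>"
  shows "real_of_ereal (f x) + inner g (y - x) \<le> real_of_ereal (f y)"
proof -
  have fx: "\<bar>f x\<bar> \<noteq> \<infinity>" and le: "f x + ereal (inner g (y - x)) \<le> f y"
    using assms(1) unfolding subdiff_def by auto
  obtain a where a: "f x = ereal a" using fx by (cases "f x") auto
  obtain b where b: "f y = ereal b" using assms(2) by (cases "f y") auto
  show ?thesis using le a b by simp
qed

lemma subdiff_finite:
  assumes "g \<in> subdiff f x"
  shows "\<bar>f x\<bar> \<noteq> \<infinity>"
  using assms unfolding subdiff_def by auto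

lemma supnorm_ge:
  assumes "finite E" "j \<in> E"
  shows "\<bar>v j\<bar> \<le> supnorm E v"
  unfolding supnorm_def using assms by (intro Max_ge) auto

lemma supnorm_diff:
  assumes "finite E" "E \<noteq> {}"
  shows "supnorm E (\<lambda>j. a j - b j) \<le> supnorm E a + supnorm E b"
  unfolding supnorm_def using assms
proof (subst Max_le_iff, simp_all, intro ballI)
  fix j assume j: "j \<in> E"
  have "\<bar>a j\<bar> \<le> Max ((\<lambda>i. \<bar>a i\<bar>) ` E)" "\<bar>b j\<bar> \<le> Max ((\<lambda>i. \<bar>b i\<bar>) ` E)"
    using assms j by (auto intro: Max_ge)
  thus "\<bar>a j - b j\<bar> \<le> Max ((\<lambda>i. \<bar>a i\<bar>) ` E) + Max ((\<lambda>i. \<bar>b i\<bar>) ` E)" by linarith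
qed

lemma div_bound:
  fixes X k M :: real
  assumes "4 + X / k \<le> M" "k > 0"
  shows "X \<le> (M - 4) * k"
proof -
  have "X / k \<le> M - 4" using assms(1) by linarith
  thus ?thesis using assms(2) by (simp add: pos_divide_le_eq)
qed

lemma split_last_sum:
  fixes f :: "nat \<Rightarrow> real"
  assumes "T \<ge> 1"
  shows "(\<Sum>t=1..T. f t) = (\<Sum>t=1..T-1. f t) + f T"
proof -
  obtain n where n: "T = Suc n" using assms by (cases T) auto
  show ?thesis unfolding n by simp
qed

lemma main_bound:
  fixes \<rho> G \<alpha> c :: real and T :: nat and M :: real and C :: "'a::{real_inner,complete_space} set"
    and \<phi> :: "nat \<Rightarrow> 'a \<Rightarrow> ereal" and xs xh xt x :: "nat \<Rightarrow> nat \<Rightarrow> 'a" and g :: "nat \<Rightarrow> 'a"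
    and lh wt w :: "nat \<Rightarrow> nat \<Rightarrow> real" and z :: "nat \<Rightarrow> 'a"
  assumes pos: "\<rho> > 0" "G > 0" "c > 0" "\<alpha> > 1" "zeta_real \<alpha> \<le> 2"
    and T1: "T \<ge> 1" and M0: "M > 0"
    and C: "C \<noteq> {}" "closed C" "convex C" "bounded C" "diameter C = \<rho>"
    and phi: "\<forall>t\<ge>1. convex_ereal (\<phi> t) \<and> (\<forall>y\<in>C. subdiff (\<phi> t) y \<noteq> {} \<and>
                  (\<forall>v\<in>subdiff (\<phi> t) y. norm v \<le> G))"
    and ogp: "\<forall>i\<in>experts T. ogp_run C (\<rho> / (G * sqrt M) * 2 ^ i) (\<lambda>t. xs t i) (\<lambda>t. xh t i)
                   (\<lambda>t. xt t i) (\<lambda>t. x t i)"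
    and sub: "\<forall>t\<ge>1. \<forall>i\<in>experts T. xs t i \<in> subdiff (\<phi> t) (x t i) \<and> norm (xh t i) \<le> G"
    and ones: "ones_run (experts T) (c / sqrt M)
           (\<lambda>i. (real i + 2) powr (-\<alpha>) / (\<Sum>j\<in>experts T. (real j + 2) powr (-\<alpha>)))
           (\<lambda>t i. inner (g t) (x t i)) lh wt w"
    and gsub: "\<forall>t\<ge>1. g t \<in> subdiff (\<phi> t) (\<Sum>i\<in>experts T. w t i *\<^sub>R x t i)"
    and lb: "\<forall>t\<ge>1. supnorm (experts T) (\<lambda>i. inner (g t) (x t i)) \<le> \<rho> * G \<and> supnorm (experts T) (lh t) \<le> \<rho> * G"
    and MM: "max (4 + (\<Sum>t=1..T-1. (supnorm (experts T) (\<lambda>i. inner (g t) (x t i) - lh t i))\<^sup>2) / (\<rho>\<^sup>2 * G\<^sup>2))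
                 (Max ((\<lambda>j. 4 + (\<Sum>t=1..T-1. (norm (xs t j - xh t j))\<^sup>2) / G\<^sup>2) ` experts T)) \<le> M"
    and z: "\<forall>t\<in>{1..T}. z t \<in> C"
  shows "(\<Sum>t=1..T. \<phi> t (\<Sum>i\<in>experts T. w t i *\<^sub>R x t i) - \<phi> t (z t))
           \<le> ereal (((\<alpha> / c + 3 * \<rho> * G / 2 + 2 * c * \<rho>\<^sup>2 * G\<^sup>2) * sqrt (1 + 2 / \<rho>)) * sqrt ((1 + (\<Sum>t=2..T. norm (z t - z (t - 1)))) * M))"
proof -
  define E where "E = experts T"
  define N where "N = nat \<lfloor>log 2 (sqrt (2 * real T - 1))\<rfloor>"
  have Edef: "E = {0..N}" by (simp add: E_def N_def experts_def)
  have finE: "finite E" and E0: "0 \<in> E" and Ene: "E \<noteq> {}" by (auto simp: Edef)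
  define l where "l t j = inner (g t) (x t j)" for t j
  define xbar where "xbar t = (\<Sum>j\<in>E. w t j *\<^sub>R x t j)" for t
  define \<theta> where "\<theta> = c / sqrt M"
  define P where "P = (\<Sum>t=2..T. norm (z t - z (t - 1)))"
  define f where "f t y = real_of_ereal (\<phi> t y)" for t y
  have th: "\<theta> > 0" using pos M0 by (simp add: \<theta>_def)
  have P0: "P \<ge> 0" by (simp add: P_def sum_nonneg)
  have PT: "P \<le> \<rho> * (real T - 1)"
  proof -
    have "P \<le> real (card {2..T}) * \<rho>"
      unfolding P_def
    proof (rule sum_bounded_above)
      fix t assume t: "t \<in> {2..T}"
      have "t \<in> {1..T}" "t - 1 \<in> {1..T}" using t by auto
      hence "z t \<in> C" "z (t - 1) \<in> C" using z by blast+
      thus "norm (z t - z (t - 1)) \<le> \<rho>" using diameter_bounded_bound[OF C(4)] C(5) by (simp add: dist_norm)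
    qed
    also have "real (card {2..T}) = real T - 1" using T1 by simp
    finally show ?thesis by (simp add: mult.commute)
  qed
  define s where "s = sqrt (1 + 2 * P / \<rho>)"
  have s1: "s \<ge> 1" using P0 pos by (simp add: s_def)
  define i where "i = nat \<lfloor>log 2 s\<rfloor>"
  have i1: "2 ^ i \<le> s" "s < 2 * 2 ^ i" using choose_i[OF s1] by (simp_all add: i_def)
  have iE: "i \<in> E"
  proof -
    have "1 + 2 * P / \<rho> \<le> 2 * real T - 1"
    proof -
      have "2 * P / \<rho> \<le> 2 * (real T - 1)" using PT pos by (simp add: field_simps)
      thus ?thesis by simp
    qed
    hence "s \<le> sqrt (2 * real T - 1)" by (simp add: s_def)
    hence "i \<le> N" unfolding i_def N_def by (rule choose_i_le[OF s1])
    thus ?thesis by (simp add: Edef)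
  qed
  have xC: "x t j \<in> C" if "t \<ge> 1" "j \<in> E" for t j
  proof -
    have "x t j = metric_proj C (xt t j - (\<rho> / (G * sqrt M) * 2 ^ j) *\<^sub>R xh t j)"
      using ogp that unfolding ogp_run_def E_def by blast
    thus ?thesis using metric_proj(1)[OF C(2,3,1)] by simp
  qed
  have xsG: "norm (xs t j) \<le> G" if "t \<ge> 1" "j \<in> E" for t j
    using phi sub xC[OF that] that unfolding E_def by blast
  have xhG: "norm (xh t j) \<le> G" if "t \<ge> 1" "j \<in> E" for t j
    using sub that unfolding E_def by blast
  define S where "S = (\<Sum>j\<in>E. (real j + 2) powr (-\<alpha>))"
  have Sp: "S > 0" unfolding S_def by (rule sum_pos[OF finE Ene]) simp
  have S1: "S \<le> 1" unfolding S_def by (rule zeta_bound[OF pos(4,5) finE])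
  define w1 where "w1 j = (real j + 2) powr (-\<alpha>) / S" for j
  have onesE: "ones_run E \<theta> w1 l lh wt w"
    using ones unfolding E_def[symmetric] S_def[symmetric] \<theta>_def[symmetric] w1_def[abs_def] l_def[abs_def] .
  have w1p: "\<forall>j\<in>E. w1 j > 0" using Sp by (simp add: w1_def)
  have w1s: "(\<Sum>j\<in>E. w1 j) = 1" using Sp by (simp add: w1_def S_def sum_divide_distrib[symmetric])
  have wpos: "(\<forall>j\<in>E. w t j > 0) \<and> (\<Sum>j\<in>E. w t j) = 1" if "t \<ge> 1" for t
    by (rule ones_pos[OF finE iE th onesE w1p w1s that])
  have round: "f t (xbar t) - f t (z t) \<le> ((\<Sum>j\<in>E. w t j * l t j) - l t i) + inner (xs t i) (x t i - z t)"
    if t: "t \<in> {1..T}" for t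
  proof -
    have t1: "t \<ge> 1" using t by simp
    have gs: "g t \<in> subdiff (\<phi> t) (xbar t)" using gsub t1 by (simp add: xbar_def E_def)
    have xss: "xs t i \<in> subdiff (\<phi> t) (x t i)" using sub t1 iE by (simp add: E_def)
    have fxi: "\<bar>\<phi> t (x t i)\<bar> \<noteq> \<infinity>" by (rule subdiff_finite[OF xss])
    obtain v where "v \<in> subdiff (\<phi> t) (z t)" using phi t1 z t by blast
    hence fz: "\<bar>\<phi> t (z t)\<bar> \<noteq> \<infinity>" by (rule subdiff_finite)
    have a1: "f t (xbar t) + inner (g t) (x t i - xbar t) \<le> f t (x t i)"
      using subgrad_real[OF gs fxi] by (simp add: f_def)
    have a2: "f t (x t i) + inner (xs t i) (z t - x t i) \<le> f t (z t)"
      using subgrad_real[OF xss fz] by (simp add: f_def)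
    have "inner (g t) (xbar t) = (\<Sum>j\<in>E. w t j * l t j)"
      by (simp add: xbar_def l_def inner_sum_right)
    hence e1: "inner (g t) (x t i - xbar t) = l t i - (\<Sum>j\<in>E. w t j * l t j)"
      by (simp add: inner_diff_right l_def)
    have e2: "inner (xs t i) (z t - x t i) = - inner (xs t i) (x t i - z t)"
      by (simp add: inner_diff_right)
    show ?thesis using a1 a2 e1 e2 by linarith
  qed
  have conv: "(\<Sum>t=1..T. \<phi> t (xbar t) - \<phi> t (z t)) = ereal (\<Sum>t=1..T. f t (xbar t) - f t (z t))"
  proof -
    have "(\<Sum>t=1..T. \<phi> t (xbar t) - \<phi> t (z t)) = (\<Sum>t=1..T. ereal (f t (xbar t) - f t (z t)))"
    proof (rule sum.cong[OF refl])
      fix t assume t: "t \<in> {1..T}"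
      have t1: "t \<ge> 1" using t by simp
      have gs: "g t \<in> subdiff (\<phi> t) (xbar t)" using gsub t1 by (simp add: xbar_def E_def)
      obtain v where "v \<in> subdiff (\<phi> t) (z t)" using phi t1 z t by blast
      hence fz: "\<bar>\<phi> t (z t)\<bar> \<noteq> \<infinity>" by (rule subdiff_finite)
      have fx: "\<bar>\<phi> t (xbar t)\<bar> \<noteq> \<infinity>" by (rule subdiff_finite[OF gs])
      have "\<phi> t (xbar t) = ereal (f t (xbar t))" using fx by (simp add: f_def ereal_real')
      moreover have "\<phi> t (z t) = ereal (f t (z t))" using fz by (simp add: f_def ereal_real')
      ultimately show "\<phi> t (xbar t) - \<phi> t (z t) = ereal (f t (xbar t) - f t (z t))" by simp
    qed
    also have "\<dots> = ereal (\<Sum>t=1..T. f t (xbar t) - f t (z t))" by (rule sum_ereal)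
    finally show ?thesis .
  qed
  define meta where "meta = (\<Sum>t=1..T. (\<Sum>j\<in>E. w t j * l t j) - l t i)"
  define expert where "expert = (\<Sum>t=1..T. inner (xs t i) (x t i - z t))"
  define R where "R = (\<Sum>t=1..T. f t (xbar t) - f t (z t))"
  have Rle: "R \<le> meta + expert"
  proof -
    have "R \<le> (\<Sum>t=1..T. ((\<Sum>j\<in>E. w t j * l t j) - l t i) + inner (xs t i) (x t i - z t))"
      unfolding R_def by (rule sum_mono) (rule round)
    thus ?thesis by (simp add: meta_def expert_def sum.distrib)
  qed
  define D where "D t = supnorm E (\<lambda>j. l t j - lh t j)" for t
  have Dge: "\<bar>l t j - lh t j\<bar> \<le> D t" if "j \<in> E" for t j
    unfolding D_def by (rule supnorm_ge[OF finE that, of "\<lambda>j. l t j - lh t j", simplified])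
  have oreg: "\<theta> * meta \<le> - ln (w1 i) + 2 * \<theta>\<^sup>2 * (\<Sum>t=1..T. (D t)\<^sup>2)"
    unfolding meta_def by (rule ones_regret[OF finE iE th onesE w1p w1s Dge])
  have lnw: "- ln (w1 i) \<le> \<alpha> * (real i + 1)"
  proof -
    have "ln (w1 i) = - \<alpha> * ln (real i + 2) - ln S"
      using Sp by (simp add: w1_def ln_div ln_powr)
    moreover have "ln S \<le> 0" using Sp S1 by simp
    moreover have "ln (real i + 2) \<le> real i + 1" using ln_le_minus_one[of "real i + 2"] by simp
    moreover have "\<alpha> * ln (real i + 2) \<le> \<alpha> * (real i + 1)"
      by (rule mult_left_mono) (use \<open>ln (real i + 2) \<le> real i + 1\<close> pos in auto)
    ultimately show ?thesis by linarith
  qed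
  have DT: "(\<Sum>t=1..T. (D t)\<^sup>2) \<le> \<rho>\<^sup>2 * G\<^sup>2 * M"
  proof -
    have L: "4 + (\<Sum>t=1..T-1. (D t)\<^sup>2) / (\<rho>\<^sup>2 * G\<^sup>2) \<le> M"
      using MM by (simp add: D_def E_def l_def)
    have rg: "\<rho>\<^sup>2 * G\<^sup>2 > 0" using pos by simp
    have "(\<Sum>t=1..T-1. (D t)\<^sup>2) \<le> (M - 4) * (\<rho>\<^sup>2 * G\<^sup>2)"
      by (rule div_bound[OF L rg])
    moreover have "(D T)\<^sup>2 \<le> 4 * (\<rho>\<^sup>2 * G\<^sup>2)"
    proof -
      have "D T \<le> supnorm E (l T) + supnorm E (lh T)"
        unfolding D_def by (rule supnorm_diff[OF finE Ene])
      also have "\<dots> \<le> 2 * (\<rho> * G)"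
      proof -
        have "supnorm E (l T) \<le> \<rho> * G" "supnorm E (lh T) \<le> \<rho> * G"
          using lb T1 unfolding E_def l_def[abs_def] by auto
        thus ?thesis by linarith
      qed
      finally have "D T \<le> 2 * (\<rho> * G)" .
      moreover have "0 \<le> D T" using Dge[OF E0, of T] by linarith
      ultimately have "(D T)\<^sup>2 \<le> (2 * (\<rho> * G))\<^sup>2" using power_mono[of "D T" "2 * (\<rho> * G)" 2] by blast
      thus ?thesis by (simp add: power_mult_distrib)
    qed
    ultimately show ?thesis using split_last_sum[OF T1, of "\<lambda>t. (D t)\<^sup>2"] by (simp add: algebra_simps)
  qed
  have metab: "meta \<le> \<alpha> * (real i + 1) * sqrt M / c + 2 * c * \<rho>\<^sup>2 * G\<^sup>2 * sqrt M"
  proof -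
    have "\<theta> * meta \<le> \<alpha> * (real i + 1) + 2 * \<theta>\<^sup>2 * (\<rho>\<^sup>2 * G\<^sup>2 * M)"
      using oreg lnw DT th by (smt (verit) mult_left_mono zero_le_power2 mult_nonneg_nonneg)
    hence "meta \<le> (\<alpha> * (real i + 1) + 2 * \<theta>\<^sup>2 * (\<rho>\<^sup>2 * G\<^sup>2 * M)) / \<theta>"
      using th by (simp add: field_simps)
    also have "\<dots> = \<alpha> * (real i + 1) * sqrt M / c + 2 * c * \<rho>\<^sup>2 * G\<^sup>2 * sqrt M"
    proof -
      have sM: "sqrt M > 0" "sqrt M * sqrt M = M" using M0 by auto
      show ?thesis using sM pos unfolding \<theta>_def by (simp add: field_simps power2_eq_square)
    qed
    finally show ?thesis .
  qed
  define \<eta> where "\<eta> = \<rho> / (G * sqrt M) * 2 ^ i"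
  have eta: "\<eta> > 0" using pos M0 by (simp add: \<eta>_def)
  have ogi: "ogp_run C \<eta> (\<lambda>t. xs t i) (\<lambda>t. xh t i) (\<lambda>t. xt t i) (\<lambda>t. x t i)"
    using ogp iE by (simp add: \<eta>_def E_def)
  have ogr: "expert \<le> \<eta> / 2 * (\<Sum>t=1..T. (norm (xs t i - xh t i))\<^sup>2) + (\<rho>\<^sup>2 + 2 * \<rho> * P) / (2 * \<eta>)"
    using ogp_regret[OF C(2,3,1,4) eta ogi T1 z] C(5) by (simp add: expert_def P_def)
  have QT: "(\<Sum>t=1..T. (norm (xs t i - xh t i))\<^sup>2) \<le> G\<^sup>2 * M"
  proof -
    have "4 + (\<Sum>t=1..T-1. (norm (xs t i - xh t i))\<^sup>2) / G\<^sup>2 \<le> Max ((\<lambda>j. 4 + (\<Sum>t=1..T-1. (norm (xs t j - xh t j))\<^sup>2) / G\<^sup>2) ` E)"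
      using finE iE by (intro Max_ge) auto
    hence Q: "4 + (\<Sum>t=1..T-1. (norm (xs t i - xh t i))\<^sup>2) / G\<^sup>2 \<le> M" using MM by (simp add: E_def)
    have "(\<Sum>t=1..T-1. (norm (xs t i - xh t i))\<^sup>2) \<le> (M - 4) * G\<^sup>2"
      by (rule div_bound[OF Q]) (use pos in simp)
    moreover have "(norm (xs T i - xh T i))\<^sup>2 \<le> 4 * G\<^sup>2"
    proof -
      have "norm (xs T i - xh T i) \<le> norm (xs T i) + norm (xh T i)" by (rule norm_triangle_ineq4)
      also have "\<dots> \<le> 2 * G" using xsG[OF T1 iE] xhG[OF T1 iE] by simp
      finally have "(norm (xs T i - xh T i))\<^sup>2 \<le> (2 * G)\<^sup>2" by (rule power_mono) simp
      thus ?thesis by (simp add: power_mult_distrib)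
    qed
    ultimately show ?thesis using split_last_sum[OF T1, of "\<lambda>t. (norm (xs t i - xh t i))\<^sup>2"]
      by (simp add: algebra_simps)
  qed
  have exb: "expert \<le> \<eta> * G\<^sup>2 * M / 2 + (\<rho>\<^sup>2 + 2 * \<rho> * P) / (2 * \<eta>)"
  proof -
    have "\<eta> / 2 * (\<Sum>t=1..T. (norm (xs t i - xh t i))\<^sup>2) \<le> \<eta> / 2 * (G\<^sup>2 * M)"
      using QT eta by (simp add: mult_left_mono)
    thus ?thesis using ogr by simp
  qed
  have fin: "R \<le> ((\<alpha> / c + 3 * \<rho> * G / 2 + 2 * c * \<rho>\<^sup>2 * G\<^sup>2) * sqrt (1 + 2 / \<rho>)) * sqrt ((1 + P) * M)"
    by (rule final_arith[OF pos(1-3) _ M0 P0 s_def i1 Rle metab exb \<eta>_def]) (use pos in simp)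
  show ?thesis using conv fin unfolding R_def P_def xbar_def E_def by simp
qed


theorem theorem1:
  fixes \<rho> G \<alpha> c :: real
  assumes "\<rho> > 0" and "G > 0" and "c > 0"
    and "\<alpha> > 1" and "zeta_real \<alpha> \<le> 2"
  shows "\<exists>K::real. \<forall>(T::nat) (M::real) (C::'a::{real_inner,complete_space} set)
      (\<phi>::nat \<Rightarrow> 'a \<Rightarrow> ereal) (xs::nat \<Rightarrow> nat \<Rightarrow> 'a) (xh::nat \<Rightarrow> nat \<Rightarrow> 'a)
      (xt::nat \<Rightarrow> nat \<Rightarrow> 'a) (x::nat \<Rightarrow> nat \<Rightarrow> 'a) (g::nat \<Rightarrow> 'a)
      (lh::nat \<Rightarrow> nat \<Rightarrow> real) (wt::nat \<Rightarrow> nat \<Rightarrow> real) (w::nat \<Rightarrow> nat \<Rightarrow> real)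
      (z::nat \<Rightarrow> 'a).
    let E = experts T;
        xbar = (\<lambda>t. \<Sum>i\<in>E. w t i *\<^sub>R x t i);
        l = (\<lambda>t i. inner (g t) (x t i));
        Q = (\<lambda>j. 4 + (\<Sum>t=1..T-1. (norm (xs t j - xh t j))\<^sup>2) / G\<^sup>2);
        L = 4 + (\<Sum>t=1..T-1. (supnorm E (\<lambda>i. l t i - lh t i))\<^sup>2) / (\<rho>\<^sup>2 * G\<^sup>2)
    in (T \<ge> 1 \<and> M > 0 \<and>
        C \<noteq> {} \<and> closed C \<and> convex C \<and> bounded C \<and> diameter C = \<rho> \<and>
        (\<forall>t\<ge>1. convex_ereal (\<phi> t) \<and> (\<forall>y\<in>C. subdiff (\<phi> t) y \<noteq> {} \<and>
                  (\<forall>v\<in>subdiff (\<phi> t) y. norm v \<le> G))) \<and>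
        (\<forall>i\<in>E. ogp_run C (\<rho> / (G * sqrt M) * 2 ^ i) (\<lambda>t. xs t i) (\<lambda>t. xh t i)
                   (\<lambda>t. xt t i) (\<lambda>t. x t i)) \<and>
        (\<forall>t\<ge>1. \<forall>i\<in>E. xs t i \<in> subdiff (\<phi> t) (x t i) \<and> norm (xh t i) \<le> G) \<and>
        ones_run E (c / sqrt M)
           (\<lambda>i. (real i + 2) powr (-\<alpha>) / (\<Sum>j\<in>E. (real j + 2) powr (-\<alpha>))) l lh wt w \<and>
        (\<forall>t\<ge>1. g t \<in> subdiff (\<phi> t) (xbar t)) \<and>
        (\<forall>t\<ge>1. supnorm E (l t) \<le> \<rho> * G \<and> supnorm E (lh t) \<le> \<rho> * G) \<and>
        max L (Max (Q ` E)) \<le> M \<and>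
        (\<forall>t\<in>{1..T}. z t \<in> C))
     \<longrightarrow> (\<Sum>t=1..T. \<phi> t (xbar t) - \<phi> t (z t))
           \<le> ereal (K * sqrt ((1 + (\<Sum>t=2..T. norm (z t - z (t - 1)))) * M))"
    apply (rule exI[of _ "((\<alpha> / c + 3 * \<rho> * G / 2 + 2 * c * \<rho>\<^sup>2 * G\<^sup>2) * sqrt (1 + 2 / \<rho>))"])
  apply (intro allI)
  apply (simp only: Let_def)
  apply (intro impI)
  apply (elim conjE)
  apply (rule main_bound[OF assms])
  apply assumption+
  done

end
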